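(* Let $M$ be an object of an abelian category $\mathcal A$. Then: (1) $M$ is (strongly) self-Rickart if and only if for every split fully invariant short exact sequence $0\to F\to M\to C\to 0$, $M$ is (strongly) self-$F$-split. (2) $M$ is dual (strongly) self-Rickart if and only if for every split fully invariant short exact sequence $0\to F\to M\to C\to 0$, $M$ is dual (strongly) self-$F$-split.
   Context: Convention: each statement containing parenthetical words holds in two versions: one obtained by deleting all parenthetical words and one obtained by keeping all of them. Let $\mathcal A$ be an abelian category. A morphism $s:X\to Y$ is a section if $ts=1_X$ for some $t$, and a retraction if $st=1_Y$ for some $t$. A monomorphism $i:K\to M$ is fully invariant if for every morphism $h:M\to M$ there is $\alpha:K\to K$ with $hi=i\alpha$; an epimorphism $d:M\to C$ is fully coinvariant if for every $h:M\to M$ there is $\beta:C\to C$ with $dh=\beta d$. A short exact sequence $0\to F\xrightarrow{i}M\xrightarrow{d}C\to 0$ is fully invariant if $i$ is fully invariant. $M$ is (strongly) self-$F$-split if for every morphism $g:M\to M$, $\ker(dg)$ is a (fully invariant) section; $M$ is dual (strongly) self-$F$-split if for every morphism $g:M\to M$, $\mathrm{coker}(gi)$ is a (fully coinvariant) retraction. $M$ is (strongly) self-Rickart if for every morphism $f:M\to M$, $\ker(f)$ is a (fully invariant) section, and dual (strongly) self-Rickart if for every $f:M\to M$, $\mathrm{coker}(f)$ is a (fully coinvariant) retraction. *)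

theory Defs
  imports Main
begin

record ('o, 'm) category =
  Ob  :: "'o set"
  Hom :: "'o \<Rightarrow> 'o \<Rightarrow> 'm set"
  cmp :: "'m \<Rightarrow> 'm \<Rightarrow> 'm"   (* cmp A g f = g \<circ> f *)
  Id  :: "'o \<Rightarrow> 'm"

definition is_category :: "('o, 'm) category \<Rightarrow> bool" where
  "is_category A \<longleftrightarrow>
     (\<forall>a b f. f \<in> Hom A a b \<longrightarrow> a \<in> Ob A \<and> b \<in> Ob A) \<and>
     (\<forall>a b a' b' f. f \<in> Hom A a b \<longrightarrow> f \<in> Hom A a' b' \<longrightarrow> a = a' \<and> b = b') \<and>
     (\<forall>a \<in> Ob A. Id A a \<in> Hom A a a) \<and>
     (\<forall>a b c f g. f \<in> Hom A a b \<longrightarrow> g \<in> Hom A b c \<longrightarrow> cmp A g f \<in> Hom A a c) \<and>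
     (\<forall>a b c d f g h. f \<in> Hom A a b \<longrightarrow> g \<in> Hom A b c \<longrightarrow> h \<in> Hom A c d \<longrightarrow>
         cmp A h (cmp A g f) = cmp A (cmp A h g) f) \<and>
     (\<forall>a b f. f \<in> Hom A a b \<longrightarrow> cmp A (Id A b) f = f \<and> cmp A f (Id A a) = f)"

definition is_zero_obj :: "('o, 'm) category \<Rightarrow> 'o \<Rightarrow> bool" where
  "is_zero_obj A z \<longleftrightarrow> z \<in> Ob A \<and>
     (\<forall>a \<in> Ob A. (\<exists>!f. f \<in> Hom A z a) \<and> (\<exists>!f. f \<in> Hom A a z))"

definition zm :: "('o, 'm) category \<Rightarrow> 'o \<Rightarrow> 'o \<Rightarrow> 'm" where
  "zm A a b = (THE h. h \<in> Hom A a b \<and>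
     (\<exists>z u v. is_zero_obj A z \<and> u \<in> Hom A a z \<and> v \<in> Hom A z b \<and> h = cmp A v u))"

definition mono :: "('o, 'm) category \<Rightarrow> 'o \<Rightarrow> 'o \<Rightarrow> 'm \<Rightarrow> bool" where
  "mono A a b f \<longleftrightarrow> f \<in> Hom A a b \<and>
     (\<forall>x g h. g \<in> Hom A x a \<longrightarrow> h \<in> Hom A x a \<longrightarrow> cmp A f g = cmp A f h \<longrightarrow> g = h)"

definition epi :: "('o, 'm) category \<Rightarrow> 'o \<Rightarrow> 'o \<Rightarrow> 'm \<Rightarrow> bool" where
  "epi A a b f \<longleftrightarrow> f \<in> Hom A a b \<and>
     (\<forall>x g h. g \<in> Hom A b x \<longrightarrow> h \<in> Hom A b x \<longrightarrow> cmp A g f = cmp A h f \<longrightarrow> g = h)"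

definition is_kernel :: "('o, 'm) category \<Rightarrow> 'o \<Rightarrow> 'o \<Rightarrow> 'm \<Rightarrow> 'o \<Rightarrow> 'm \<Rightarrow> bool" where
  "is_kernel A a b f K k \<longleftrightarrow> f \<in> Hom A a b \<and> k \<in> Hom A K a \<and> cmp A f k = zm A K b \<and>
     (\<forall>X g. g \<in> Hom A X a \<longrightarrow> cmp A f g = zm A X b \<longrightarrow> (\<exists>!u. u \<in> Hom A X K \<and> cmp A k u = g))"

definition is_cokernel :: "('o, 'm) category \<Rightarrow> 'o \<Rightarrow> 'o \<Rightarrow> 'm \<Rightarrow> 'o \<Rightarrow> 'm \<Rightarrow> bool" where
  "is_cokernel A a b f Q q \<longleftrightarrow> f \<in> Hom A a b \<and> q \<in> Hom A b Q \<and> cmp A q f = zm A a Q \<and>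
     (\<forall>X g. g \<in> Hom A b X \<longrightarrow> cmp A g f = zm A a X \<longrightarrow> (\<exists>!u. u \<in> Hom A Q X \<and> cmp A u q = g))"

definition has_products :: "('o, 'm) category \<Rightarrow> bool" where
  "has_products A \<longleftrightarrow> (\<forall>a \<in> Ob A. \<forall>b \<in> Ob A. \<exists>P p1 p2. p1 \<in> Hom A P a \<and> p2 \<in> Hom A P b \<and>
     (\<forall>X f g. f \<in> Hom A X a \<longrightarrow> g \<in> Hom A X b \<longrightarrow>
        (\<exists>!u. u \<in> Hom A X P \<and> cmp A p1 u = f \<and> cmp A p2 u = g)))"

definition has_coproducts :: "('o, 'm) category \<Rightarrow> bool" where
  "has_coproducts A \<longleftrightarrow> (\<forall>a \<in> Ob A. \<forall>b \<in> Ob A. \<exists>S j1 j2. j1 \<in> Hom A a S \<and> j2 \<in> Hom A b S \<and>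
     (\<forall>X f g. f \<in> Hom A a X \<longrightarrow> g \<in> Hom A b X \<longrightarrow>
        (\<exists>!u. u \<in> Hom A S X \<and> cmp A u j1 = f \<and> cmp A u j2 = g)))"

text \<open>Abelian category (Freyd's definition): zero object, binary products and coproducts,
  all kernels and cokernels, every monomorphism is a kernel, every epimorphism is a cokernel.\<close>
definition abelian :: "('o, 'm) category \<Rightarrow> bool" where
  "abelian A \<longleftrightarrow> is_category A \<and> (\<exists>z. is_zero_obj A z) \<and> has_products A \<and> has_coproducts A \<and>
     (\<forall>a b f. f \<in> Hom A a b \<longrightarrow> (\<exists>K k. is_kernel A a b f K k) \<and> (\<exists>Q q. is_cokernel A a b f Q q)) \<and>
     (\<forall>a b f. mono A a b f \<longrightarrow> (\<exists>c g. is_kernel A b c g a f)) \<and>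
     (\<forall>a b f. epi A a b f \<longrightarrow> (\<exists>c g. is_cokernel A c a g b f))"

definition is_section :: "('o, 'm) category \<Rightarrow> 'o \<Rightarrow> 'o \<Rightarrow> 'm \<Rightarrow> bool" where
  "is_section A X Y s \<longleftrightarrow> s \<in> Hom A X Y \<and> (\<exists>t. t \<in> Hom A Y X \<and> cmp A t s = Id A X)"

definition is_retraction :: "('o, 'm) category \<Rightarrow> 'o \<Rightarrow> 'o \<Rightarrow> 'm \<Rightarrow> bool" where
  "is_retraction A X Y s \<longleftrightarrow> s \<in> Hom A X Y \<and> (\<exists>t. t \<in> Hom A Y X \<and> cmp A s t = Id A Y)"

definition fully_invariant :: "('o, 'm) category \<Rightarrow> 'o \<Rightarrow> 'o \<Rightarrow> 'm \<Rightarrow> bool" where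
  "fully_invariant A K M i \<longleftrightarrow> mono A K M i \<and>
     (\<forall>h. h \<in> Hom A M M \<longrightarrow> (\<exists>\<alpha>. \<alpha> \<in> Hom A K K \<and> cmp A h i = cmp A i \<alpha>))"

definition fully_coinvariant :: "('o, 'm) category \<Rightarrow> 'o \<Rightarrow> 'o \<Rightarrow> 'm \<Rightarrow> bool" where
  "fully_coinvariant A M C d \<longleftrightarrow> epi A M C d \<and>
     (\<forall>h. h \<in> Hom A M M \<longrightarrow> (\<exists>\<beta>. \<beta> \<in> Hom A C C \<and> cmp A d h = cmp A \<beta> d))"

definition short_exact :: "('o, 'm) category \<Rightarrow> 'o \<Rightarrow> 'o \<Rightarrow> 'o \<Rightarrow> 'm \<Rightarrow> 'm \<Rightarrow> bool" where
  "short_exact A F M C i d \<longleftrightarrow> mono A F M i \<and> epi A M C d \<and> is_kernel A M C d F i"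

definition split_fi_ses :: "('o, 'm) category \<Rightarrow> 'o \<Rightarrow> 'o \<Rightarrow> 'o \<Rightarrow> 'm \<Rightarrow> 'm \<Rightarrow> bool" where
  "split_fi_ses A F M C i d \<longleftrightarrow> short_exact A F M C i d \<and> is_section A F M i \<and> fully_invariant A F M i"

definition self_F_split :: "('o, 'm) category \<Rightarrow> 'o \<Rightarrow> 'o \<Rightarrow> 'o \<Rightarrow> 'm \<Rightarrow> 'm \<Rightarrow> bool" where
  "self_F_split A F M C i d \<longleftrightarrow> (\<forall>g K k. g \<in> Hom A M M \<longrightarrow> is_kernel A M C (cmp A d g) K k \<longrightarrow>
      is_section A K M k)"

definition strongly_self_F_split :: "('o, 'm) category \<Rightarrow> 'o \<Rightarrow> 'o \<Rightarrow> 'o \<Rightarrow> 'm \<Rightarrow> 'm \<Rightarrow> bool" where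
  "strongly_self_F_split A F M C i d \<longleftrightarrow> (\<forall>g K k. g \<in> Hom A M M \<longrightarrow> is_kernel A M C (cmp A d g) K k \<longrightarrow>
      is_section A K M k \<and> fully_invariant A K M k)"

definition dual_self_F_split :: "('o, 'm) category \<Rightarrow> 'o \<Rightarrow> 'o \<Rightarrow> 'o \<Rightarrow> 'm \<Rightarrow> 'm \<Rightarrow> bool" where
  "dual_self_F_split A F M C i d \<longleftrightarrow> (\<forall>g Q q. g \<in> Hom A M M \<longrightarrow> is_cokernel A F M (cmp A g i) Q q \<longrightarrow>
      is_retraction A M Q q)"

definition dual_strongly_self_F_split :: "('o, 'm) category \<Rightarrow> 'o \<Rightarrow> 'o \<Rightarrow> 'o \<Rightarrow> 'm \<Rightarrow> 'm \<Rightarrow> bool" where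
  "dual_strongly_self_F_split A F M C i d \<longleftrightarrow> (\<forall>g Q q. g \<in> Hom A M M \<longrightarrow> is_cokernel A F M (cmp A g i) Q q \<longrightarrow>
      is_retraction A M Q q \<and> fully_coinvariant A M Q q)"

definition self_rickart :: "('o, 'm) category \<Rightarrow> 'o \<Rightarrow> bool" where
  "self_rickart A M \<longleftrightarrow> (\<forall>f K k. f \<in> Hom A M M \<longrightarrow> is_kernel A M M f K k \<longrightarrow> is_section A K M k)"

definition strongly_self_rickart :: "('o, 'm) category \<Rightarrow> 'o \<Rightarrow> bool" where
  "strongly_self_rickart A M \<longleftrightarrow> (\<forall>f K k. f \<in> Hom A M M \<longrightarrow> is_kernel A M M f K k \<longrightarrow>
      is_section A K M k \<and> fully_invariant A K M k)"

definition dual_self_rickart :: "('o, 'm) category \<Rightarrow> 'o \<Rightarrow> bool" where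
  "dual_self_rickart A M \<longleftrightarrow> (\<forall>f Q q. f \<in> Hom A M M \<longrightarrow> is_cokernel A M M f Q q \<longrightarrow> is_retraction A M Q q)"

definition dual_strongly_self_rickart :: "('o, 'm) category \<Rightarrow> 'o \<Rightarrow> bool" where
  "dual_strongly_self_rickart A M \<longleftrightarrow> (\<forall>f Q q. f \<in> Hom A M M \<longrightarrow> is_cokernel A M M f Q q \<longrightarrow>
      is_retraction A M Q q \<and> fully_coinvariant A M Q q)"

end

theory Submission
  imports Defs
begin

locale abcat =
  fixes A :: "('o, 'm) category"
  assumes ab: "abelian A"
begin

lemma cat: "is_category A" using ab unfolding abelian_def by blast

lemma hom_ob: "f \<in> Hom A a b \<Longrightarrow> a \<in> Ob A \<and> b \<in> Ob A"
  using cat unfolding is_category_def by (auto 0 0; metis)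
lemma id_hom: "a \<in> Ob A \<Longrightarrow> Id A a \<in> Hom A a a"
  using cat unfolding is_category_def by (auto 0 0; metis)
lemma comp_hom: "f \<in> Hom A a b \<Longrightarrow> g \<in> Hom A b c \<Longrightarrow> cmp A g f \<in> Hom A a c"
  using cat unfolding is_category_def by (auto 0 0; metis)
lemma assoc: "f \<in> Hom A a b \<Longrightarrow> g \<in> Hom A b c \<Longrightarrow> h \<in> Hom A c d \<Longrightarrow>
   cmp A h (cmp A g f) = cmp A (cmp A h g) f"
  using cat unfolding is_category_def by (auto 0 0; metis)
lemma idl: "f \<in> Hom A a b \<Longrightarrow> cmp A (Id A b) f = f"
  using cat unfolding is_category_def by (auto 0 0; metis)
lemma idr: "f \<in> Hom A a b \<Longrightarrow> cmp A f (Id A a) = f"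
  using cat unfolding is_category_def by (auto 0 0; metis)

lemma zero_from: "is_zero_obj A z \<Longrightarrow> a \<in> Ob A \<Longrightarrow> f \<in> Hom A z a \<Longrightarrow> g \<in> Hom A z a \<Longrightarrow> f = g"
  unfolding is_zero_obj_def by blast
lemma zero_to: "is_zero_obj A z \<Longrightarrow> a \<in> Ob A \<Longrightarrow> f \<in> Hom A a z \<Longrightarrow> g \<in> Hom A a z \<Longrightarrow> f = g"
  unfolding is_zero_obj_def by blast
lemma zero_from_ex: "is_zero_obj A z \<Longrightarrow> a \<in> Ob A \<Longrightarrow> \<exists>f. f \<in> Hom A z a"
  unfolding is_zero_obj_def by blast
lemma zero_to_ex: "is_zero_obj A z \<Longrightarrow> a \<in> Ob A \<Longrightarrow> \<exists>f. f \<in> Hom A a z"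
  unfolding is_zero_obj_def by blast

lemma zm_char:
  assumes z: "is_zero_obj A z" and u: "u \<in> Hom A a z" and v: "v \<in> Hom A z b"
  shows "zm A a b = cmp A v u"
  unfolding zm_def
proof (rule the_equality)
  show "cmp A v u \<in> Hom A a b \<and> (\<exists>z u' v'. is_zero_obj A z \<and> u' \<in> Hom A a z \<and> v' \<in> Hom A z b \<and> cmp A v u = cmp A v' u')"
    using z u v comp_hom by blast
next
  fix h assume "h \<in> Hom A a b \<and> (\<exists>z u v. is_zero_obj A z \<and> u \<in> Hom A a z \<and> v \<in> Hom A z b \<and> h = cmp A v u)"
  then obtain z' u' v' where z': "is_zero_obj A z'" and u': "u' \<in> Hom A a z'" and v': "v' \<in> Hom A z' b"
    and h: "h = cmp A v' u'" by blast
  have ob: "a \<in> Ob A" "b \<in> Ob A" "z' \<in> Ob A" using hom_ob u v' by blast+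
  obtain w where w: "w \<in> Hom A z z'" using zero_from_ex[OF z ob(3)] by blast
  have 1: "cmp A v' w = v" using zero_from[OF z ob(2)] comp_hom[OF w v'] v by blast
  have 2: "cmp A w u = u'" using zero_to[OF z' ob(1)] comp_hom[OF u w] u' by blast
  show "h = cmp A v u" using h 1 2 assoc[OF u w v'] by simp
qed

lemma zero_ex: "\<exists>z. is_zero_obj A z" using ab unfolding abelian_def by blast

lemma zm_hom: assumes "a \<in> Ob A" "b \<in> Ob A" shows "zm A a b \<in> Hom A a b"
proof -
  obtain z where z: "is_zero_obj A z" using zero_ex by blast
  obtain u v where u: "u \<in> Hom A a z" and v: "v \<in> Hom A z b"
    using zero_from_ex[OF z assms(2)] zero_to_ex[OF z assms(1)] by blast
  show ?thesis using zm_char[OF z u v] comp_hom[OF u v] by simp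
qed

lemma zm_left: assumes f: "f \<in> Hom A b c" and a: "a \<in> Ob A" shows "cmp A f (zm A a b) = zm A a c"
proof -
  obtain z where z: "is_zero_obj A z" using zero_ex by blast
  have b: "b \<in> Ob A" using hom_ob f by blast
  obtain u v where u: "u \<in> Hom A a z" and v: "v \<in> Hom A z b"
    using zero_from_ex[OF z b] zero_to_ex[OF z a] by blast
  show ?thesis using zm_char[OF z u v] zm_char[OF z u comp_hom[OF v f]] assoc[OF u v f] by simp
qed

lemma zm_right: assumes f: "f \<in> Hom A a b" and c: "c \<in> Ob A" shows "cmp A (zm A b c) f = zm A a c"
proof -
  obtain z where z: "is_zero_obj A z" using zero_ex by blast
  have b: "b \<in> Ob A" using hom_ob f by blast
  obtain u v where u: "u \<in> Hom A b z" and v: "v \<in> Hom A z c"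
    using zero_from_ex[OF z c] zero_to_ex[OF z b] by blast
  show ?thesis using zm_char[OF z u v] zm_char[OF z comp_hom[OF f u] v] assoc[OF f u v] by simp
qed

lemma mono_hom: "mono A a b f \<Longrightarrow> f \<in> Hom A a b" unfolding mono_def by blast
lemma epi_hom: "epi A a b f \<Longrightarrow> f \<in> Hom A a b" unfolding epi_def by blast
lemma mono_cancel: "mono A a b f \<Longrightarrow> g \<in> Hom A x a \<Longrightarrow> h \<in> Hom A x a \<Longrightarrow> cmp A f g = cmp A f h \<Longrightarrow> g = h"
  unfolding mono_def by blast
lemma epi_cancel: "epi A a b f \<Longrightarrow> g \<in> Hom A b x \<Longrightarrow> h \<in> Hom A b x \<Longrightarrow> cmp A g f = cmp A h f \<Longrightarrow> g = h"
  unfolding epi_def by blast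

lemma section_mono: assumes "is_section A K M k" shows "mono A K M k"
proof -
  obtain r where k: "k \<in> Hom A K M" and r: "r \<in> Hom A M K" and rk: "cmp A r k = Id A K"
    using assms unfolding is_section_def by blast
  show ?thesis unfolding mono_def
  proof (intro conjI allI impI)
    fix x g h assume g: "g \<in> Hom A x K" and h: "h \<in> Hom A x K" and e: "cmp A k g = cmp A k h"
    have "g = cmp A (cmp A r k) g" using idl[OF g] rk by simp
    also have "\<dots> = cmp A (cmp A r k) h" using assoc[OF g k r] assoc[OF h k r] e by simp
    also have "\<dots> = h" using idl[OF h] rk by simp
    finally show "g = h" .
  qed (rule k)
qed

lemma retr_epi: assumes "t \<in> Hom A M F" "i \<in> Hom A F M" "cmp A t i = Id A F" shows "epi A M F t"
  unfolding epi_def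
proof (intro conjI allI impI)
  fix x g h assume g: "g \<in> Hom A F x" and h: "h \<in> Hom A F x" and e: "cmp A g t = cmp A h t"
  have "g = cmp A g (cmp A t i)" using idr[OF g] assms by simp
  also have "\<dots> = cmp A h (cmp A t i)" using assoc[OF assms(2,1) g] assoc[OF assms(2,1) h] e by simp
  also have "\<dots> = h" using idr[OF h] assms by simp
  finally show "g = h" .
qed (rule assms(1))


lemma kernel_ex: "f \<in> Hom A a b \<Longrightarrow> \<exists>K k. is_kernel A a b f K k"
  using ab unfolding abelian_def by blast
lemma mono_kernel: "mono A a b f \<Longrightarrow> \<exists>c g. is_kernel A b c g a f"
  using ab unfolding abelian_def by blast
lemma epi_cokernel: "epi A a b f \<Longrightarrow> \<exists>c g. is_cokernel A c a g b f"
  using ab unfolding abelian_def by blast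

lemma kill:
  assumes t: "t \<in> Hom A M F" and i: "i \<in> Hom A F M" and ti: "cmp A t i = Id A F"
    and k0: "is_kernel A M M (cmp A i t) K0 k0"
    and c: "c \<in> Hom A M Y" and ck: "cmp A c k0 = zm A K0 Y" and ci: "cmp A c i = zm A F Y"
  shows "c = zm A M Y"
proof -
  have ep: "epi A M F t" by (rule retr_epi[OF t i ti])
  obtain W w where cw: "is_cokernel A W M w F t" using epi_cokernel[OF ep] by blast
  have w: "w \<in> Hom A W M" and tw: "cmp A t w = zm A W F" using cw unfolding is_cokernel_def by blast+
  have ob: "W \<in> Ob A" "M \<in> Ob A" "F \<in> Ob A" "Y \<in> Ob A" using hom_ob w t c by blast+
  have "cmp A (cmp A i t) w = zm A W M" using assoc[OF w t i] tw zm_left[OF i ob(1)] by simp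
  then obtain v where v: "v \<in> Hom A W K0" and kv: "cmp A k0 v = w"
    using k0 w unfolding is_kernel_def by blast
  have k0h: "k0 \<in> Hom A K0 M" using k0 unfolding is_kernel_def by blast
  have "cmp A c w = zm A W Y" using kv assoc[OF v k0h c] ck zm_right[OF v ob(4)] by simp
  then obtain c' where c': "c' \<in> Hom A F Y" and ct: "cmp A c' t = c"
    using cw c unfolding is_cokernel_def by blast
  have "c' = zm A F Y" using ci ct assoc[OF i t c'] ti idr[OF c'] by simp
  then show ?thesis using ct zm_right[OF t ob(4)] by simp
qed

lemma pair_unique:
  assumes "p1 \<in> Hom A P a" "p2 \<in> Hom A P b"
    and U: "\<forall>X f g. f \<in> Hom A X a \<longrightarrow> g \<in> Hom A X b \<longrightarrow>
        (\<exists>!u. u \<in> Hom A X P \<and> cmp A p1 u = f \<and> cmp A p2 u = g)"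
    and "u \<in> Hom A X P" "v \<in> Hom A X P" "cmp A p1 u = cmp A p1 v" "cmp A p2 u = cmp A p2 v"
  shows "u = v"
proof -
  have "cmp A p1 u \<in> Hom A X a" "cmp A p2 u \<in> Hom A X b" using assms comp_hom by blast+
  then have "\<exists>!w. w \<in> Hom A X P \<and> cmp A p1 w = cmp A p1 u \<and> cmp A p2 w = cmp A p2 u"
    using U by simp
  then show ?thesis using assms(4-7) by (metis (no_types, lifting))
qed

lemma agree:
  assumes t: "t \<in> Hom A M F" and i: "i \<in> Hom A F M" and ti: "cmp A t i = Id A F"
    and k0: "is_kernel A M M (cmp A i t) K0 k0"
    and x: "x \<in> Hom A M C" and y: "y \<in> Hom A M C"
    and xk: "cmp A x k0 = cmp A y k0" and xi: "cmp A x i = cmp A y i"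
  shows "x = y"
proof -
  have ob: "M \<in> Ob A" "C \<in> Ob A" "F \<in> Ob A" using hom_ob x t by blast+
  have k0h: "k0 \<in> Hom A K0 M" using k0 unfolding is_kernel_def by blast
  have K0: "K0 \<in> Ob A" using hom_ob k0h by blast
  obtain P p1 p2 where p1: "p1 \<in> Hom A P M" and p2: "p2 \<in> Hom A P C" and
    U: "\<forall>X f g. f \<in> Hom A X M \<longrightarrow> g \<in> Hom A X C \<longrightarrow>
        (\<exists>!u. u \<in> Hom A X P \<and> cmp A p1 u = f \<and> cmp A p2 u = g)"
    using ab ob unfolding abelian_def has_products_def by blast
  obtain gx where gx: "gx \<in> Hom A M P" "cmp A p1 gx = Id A M" "cmp A p2 gx = x"
    using U id_hom[OF ob(1)] x by blast
  obtain gy where gy: "gy \<in> Hom A M P" "cmp A p1 gy = Id A M" "cmp A p2 gy = y"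
    using U id_hom[OF ob(1)] y by blast
  have mgy: "mono A M P gy"
    by (rule section_mono) (use gy p1 in \<open>auto simp: is_section_def\<close>)
  obtain Y c where cg: "is_kernel A P Y c M gy" using mono_kernel[OF mgy] by blast
  have c: "c \<in> Hom A P Y" and cgy: "cmp A c gy = zm A M Y" using cg unfolding is_kernel_def by blast+
  have Y: "Y \<in> Ob A" using hom_ob c by blast
  have eqk: "cmp A gx k0 = cmp A gy k0"
    apply (rule pair_unique[OF p1 p2 U comp_hom[OF k0h gx(1)] comp_hom[OF k0h gy(1)]])
    using assoc[OF k0h gx(1) p1] assoc[OF k0h gy(1) p1]
      assoc[OF k0h gx(1) p2] assoc[OF k0h gy(1) p2] gx gy xk by simp_all
  have eqi: "cmp A gx i = cmp A gy i"
    apply (rule pair_unique[OF p1 p2 U comp_hom[OF i gx(1)] comp_hom[OF i gy(1)]])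
    using assoc[OF i gx(1) p1] assoc[OF i gy(1) p1]
      assoc[OF i gx(1) p2] assoc[OF i gy(1) p2] gx gy xi by simp_all
  have z: "cmp A c gx = zm A M Y"
  proof (rule kill[OF t i ti k0 comp_hom[OF gx(1) c]])
    show "cmp A (cmp A c gx) k0 = zm A K0 Y"
      using assoc[OF k0h gx(1) c] assoc[OF k0h gy(1) c] eqk cgy zm_right[OF k0h Y] by simp
    show "cmp A (cmp A c gx) i = zm A F Y"
      using assoc[OF i gx(1) c] assoc[OF i gy(1) c] eqi cgy zm_right[OF i Y] by simp
  qed
  then obtain u where u: "u \<in> Hom A M M" and gu: "cmp A gy u = gx"
    using cg gx(1) unfolding is_kernel_def by blast
  have "u = Id A M" using gu gx(2) gy(2) assoc[OF u gy(1) p1] idl[OF u] by simp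
  then have "gx = gy" using gu idr[OF gy(1)] by simp
  then show ?thesis using gx gy by simp
qed


lemma split_d:
  assumes S: "split_fi_ses A F M C i d" and R: "self_rickart A M"
  shows "\<exists>s. s \<in> Hom A C M \<and> cmp A d s = Id A C"
proof -
  have mi: "mono A F M i" and ed: "epi A M C d" and kd: "is_kernel A M C d F i"
    and si: "is_section A F M i" and fi: "fully_invariant A F M i"
    using S unfolding split_fi_ses_def short_exact_def by blast+
  have i: "i \<in> Hom A F M" using mono_hom[OF mi] .
  have d: "d \<in> Hom A M C" using epi_hom[OF ed] .
  have di: "cmp A d i = zm A F C" using kd unfolding is_kernel_def by blast
  obtain t where t: "t \<in> Hom A M F" and ti: "cmp A t i = Id A F" using si unfolding is_section_def by blast
  have ob: "M \<in> Ob A" "C \<in> Ob A" "F \<in> Ob A" using hom_ob d i by blast+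
  have it: "cmp A i t \<in> Hom A M M" using comp_hom[OF t i] .
  obtain K0 k0 where k0: "is_kernel A M M (cmp A i t) K0 k0" using kernel_ex[OF it] by blast
  have k0h: "k0 \<in> Hom A K0 M" and itk: "cmp A (cmp A i t) k0 = zm A K0 M" using k0 unfolding is_kernel_def by blast+
  have K0: "K0 \<in> Ob A" using hom_ob k0h by blast
  have sk: "is_section A K0 M k0" using R it k0 unfolding self_rickart_def by blast
  then obtain r where r: "r \<in> Hom A M K0" and rk: "cmp A r k0 = Id A K0" unfolding is_section_def by blast
  have mk: "mono A K0 M k0" using section_mono[OF sk] .
  have tk: "cmp A t k0 = zm A K0 F"
    apply (rule mono_cancel[OF mi comp_hom[OF k0h t] zm_hom[OF K0 ob(3)]])
    using assoc[OF k0h t i] itk zm_left[OF i K0] by simp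
  have kr: "cmp A k0 r \<in> Hom A M M" using comp_hom[OF r k0h] .
  obtain \<alpha> where al: "\<alpha> \<in> Hom A F F" and kri: "cmp A (cmp A k0 r) i = cmp A i \<alpha>"
    using fi kr unfolding fully_invariant_def by blast
  have ri: "cmp A r i \<in> Hom A F K0" using comp_hom[OF i r] .
  have "\<alpha> = cmp A t (cmp A i \<alpha>)" using assoc[OF al i t] ti idl[OF al] by simp
  also have "\<dots> = cmp A t (cmp A k0 (cmp A r i))" using kri assoc[OF i r k0h] by simp
  also have "\<dots> = zm A F F" using assoc[OF ri k0h t] tk zm_right[OF ri ob(3)] by simp
  finally have alz: "\<alpha> = zm A F F" .
  have riz: "cmp A r i = zm A F K0"
    apply (rule mono_cancel[OF mk ri zm_hom[OF ob(3) K0]])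
    using assoc[OF i r k0h] kri alz zm_left[OF i ob(3)] zm_left[OF k0h ob(3)] by simp
  obtain Wc w where cw: "is_cokernel A Wc M w C d" using epi_cokernel[OF ed] by blast
  have w: "w \<in> Hom A Wc M" and dw: "cmp A d w = zm A Wc C" using cw unfolding is_cokernel_def by blast+
  have Wc: "Wc \<in> Ob A" using hom_ob w by blast
  obtain v where v: "v \<in> Hom A Wc F" and iv: "cmp A i v = w" using kd w dw unfolding is_kernel_def by blast
  have "cmp A r w = zm A Wc K0" using iv assoc[OF v i r] riz zm_right[OF v K0] by simp
  then obtain \<rho> where rho: "\<rho> \<in> Hom A C K0" and rd: "cmp A \<rho> d = r" using cw r unfolding is_cokernel_def by blast
  define s where "s = cmp A k0 \<rho>"
  have s: "s \<in> Hom A C M" unfolding s_def using comp_hom[OF rho k0h] .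
  have dk: "cmp A d k0 \<in> Hom A K0 C" using comp_hom[OF k0h d] .
  have x: "cmp A (cmp A d k0) r \<in> Hom A M C" using comp_hom[OF r dk] .
  have agr: "cmp A (cmp A d k0) r = d"
  proof (rule agree[OF t i ti k0 x d])
    show "cmp A (cmp A (cmp A d k0) r) k0 = cmp A d k0" using assoc[OF k0h r dk] rk idr[OF dk] by simp
    show "cmp A (cmp A (cmp A d k0) r) i = cmp A d i" using assoc[OF i r dk] riz zm_left[OF dk ob(3)] di by simp
  qed
  have "cmp A d s = Id A C"
  proof (rule epi_cancel[OF ed comp_hom[OF s d] id_hom[OF ob(2)]])
    have "cmp A (cmp A d s) d = cmp A (cmp A d k0) (cmp A \<rho> d)"
      unfolding s_def using assoc[OF d rho dk] assoc[OF rho k0h d] by simp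
    also have "\<dots> = d" using rd agr by simp
    finally show "cmp A (cmp A d s) d = cmp A (Id A C) d" using idl[OF d] by simp
  qed
  then show ?thesis using s by blast
qed

lemma ker_transfer:
  assumes s: "s \<in> Hom A C M" and ds: "cmp A d s = Id A C" and g: "g \<in> Hom A M M"
    and d: "d \<in> Hom A M C" and K: "is_kernel A M C (cmp A d g) K k"
  shows "is_kernel A M M (cmp A s (cmp A d g)) K k"
proof -
  have dg: "cmp A d g \<in> Hom A M C" using comp_hom[OF g d] .
  have k: "k \<in> Hom A K M" and dgk: "cmp A (cmp A d g) k = zm A K C" using K unfolding is_kernel_def by blast+
  have ob: "M \<in> Ob A" "K \<in> Ob A" using hom_ob k by blast+
  have sdg: "cmp A s (cmp A d g) \<in> Hom A M M" using comp_hom[OF dg s] .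
  show ?thesis unfolding is_kernel_def
  proof (intro conjI allI impI sdg k)
    show "cmp A (cmp A s (cmp A d g)) k = zm A K M"
      using assoc[OF k dg s] dgk zm_left[OF s ob(2)] by simp
    fix X h assume h: "h \<in> Hom A X M" and e: "cmp A (cmp A s (cmp A d g)) h = zm A X M"
    have X: "X \<in> Ob A" using hom_ob h by blast
    have "cmp A (cmp A d g) h = cmp A (cmp A d s) (cmp A (cmp A d g) h)" using idl[OF comp_hom[OF h dg]] ds by simp
    also have "\<dots> = cmp A d (cmp A (cmp A s (cmp A d g)) h)"
      using assoc[OF comp_hom[OF h dg] s d] assoc[OF h dg s] by simp
    also have "\<dots> = zm A X C" using e zm_left[OF d X] by simp
    finally show "\<exists>!u. u \<in> Hom A X K \<and> cmp A k u = h" using K h unfolding is_kernel_def by blast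
  qed
qed


lemma zero_ob: "is_zero_obj A z \<Longrightarrow> z \<in> Ob A" unfolding is_zero_obj_def by blast

lemma triv1:
  assumes z: "is_zero_obj A z" and i: "i \<in> Hom A z M"
  shows "split_fi_ses A z M M i (Id A M)"
proof -
  have ob: "M \<in> Ob A" "z \<in> Ob A" using hom_ob i by blast+
  have idM: "Id A M \<in> Hom A M M" using id_hom[OF ob(1)] .
  have mi: "mono A z M i" unfolding mono_def using i zero_to[OF z] hom_ob by blast
  have ed: "epi A M M (Id A M)" unfolding epi_def using idM idr by metis
  have zi: "zm A z M = i" using zm_char[OF z id_hom[OF ob(2)] i] idr[OF i] by simp
  have kd: "is_kernel A M M (Id A M) z i" unfolding is_kernel_def
  proof (intro conjI allI impI idM i)
    show "cmp A (Id A M) i = zm A z M" using idl[OF i] zi by simp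
    fix X g assume g: "g \<in> Hom A X M" and e: "cmp A (Id A M) g = zm A X M"
    have X: "X \<in> Ob A" using hom_ob g by blast
    obtain u where u: "u \<in> Hom A X z" using zero_to_ex[OF z X] by blast
    have "cmp A i u = g" using zm_char[OF z u i] e idl[OF g] by simp
    then show "\<exists>!u. u \<in> Hom A X z \<and> cmp A i u = g" using u zero_to[OF z X] by blast
  qed
  obtain t where t: "t \<in> Hom A M z" using zero_to_ex[OF z ob(1)] by blast
  have si: "is_section A z M i" unfolding is_section_def
    using i t comp_hom[OF i t] id_hom[OF ob(2)] zero_to[OF z ob(2)] by blast
  have fi: "fully_invariant A z M i" unfolding fully_invariant_def
  proof (intro conjI allI impI mi)
    fix h assume h: "h \<in> Hom A M M"
    show "\<exists>\<alpha>. \<alpha> \<in> Hom A z z \<and> cmp A h i = cmp A i \<alpha>"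
      using zero_from[OF z ob(1) comp_hom[OF i h] comp_hom[OF id_hom[OF ob(2)] i]] id_hom[OF ob(2)] by blast
  qed
  show ?thesis unfolding split_fi_ses_def short_exact_def using mi ed kd si fi by blast
qed

lemma triv2:
  assumes z: "is_zero_obj A z" and d: "d \<in> Hom A M z"
  shows "split_fi_ses A M M z (Id A M) d"
proof -
  have ob: "M \<in> Ob A" "z \<in> Ob A" using hom_ob d by blast+
  have idM: "Id A M \<in> Hom A M M" using id_hom[OF ob(1)] .
  have mi: "mono A M M (Id A M)" unfolding mono_def using idM idl by metis
  have ed: "epi A M z d" unfolding epi_def using d zero_from[OF z] hom_ob by blast
  have kd: "is_kernel A M z d M (Id A M)" unfolding is_kernel_def
  proof (intro conjI allI impI idM d)
    show "cmp A d (Id A M) = zm A M z" using idr[OF d] zero_to[OF z ob(1) d zm_hom[OF ob]] by simp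
    fix X g assume g: "g \<in> Hom A X M" and e: "cmp A d g = zm A X z"
    show "\<exists>!u. u \<in> Hom A X M \<and> cmp A (Id A M) u = g" using g idl by metis
  qed
  have si: "is_section A M M (Id A M)" unfolding is_section_def using idM idl by metis
  have fi: "fully_invariant A M M (Id A M)" unfolding fully_invariant_def
    using mi idl idr by metis
  show ?thesis unfolding split_fi_ses_def short_exact_def using mi ed kd si fi by blast
qed

lemma coker_transfer:
  assumes S: "split_fi_ses A F M C i d" and g: "g \<in> Hom A M M" and Q: "is_cokernel A F M (cmp A g i) Q q"
  obtains t where "t \<in> Hom A M F" "is_cokernel A M M (cmp A (cmp A g i) t) Q q"
proof -
  have mi: "mono A F M i" and si: "is_section A F M i"
    using S unfolding split_fi_ses_def short_exact_def by blast+
  have i: "i \<in> Hom A F M" using mono_hom[OF mi] .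
  obtain t where t: "t \<in> Hom A M F" and ti: "cmp A t i = Id A F" using si unfolding is_section_def by blast
  have gi: "cmp A g i \<in> Hom A F M" using comp_hom[OF i g] .
  have q: "q \<in> Hom A M Q" and qgi: "cmp A q (cmp A g i) = zm A F Q" using Q unfolding is_cokernel_def by blast+
  have ob: "M \<in> Ob A" "Q \<in> Ob A" "F \<in> Ob A" using hom_ob q i by blast+
  have git: "cmp A (cmp A g i) t \<in> Hom A M M" using comp_hom[OF t gi] .
  have "is_cokernel A M M (cmp A (cmp A g i) t) Q q" unfolding is_cokernel_def
  proof (intro conjI allI impI git q)
    show "cmp A q (cmp A (cmp A g i) t) = zm A M Q" using assoc[OF t gi q] qgi zm_right[OF t ob(2)] by simp
    fix X h assume h: "h \<in> Hom A M X" and e: "cmp A h (cmp A (cmp A g i) t) = zm A M X"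
    have X: "X \<in> Ob A" using hom_ob h by blast
    have "cmp A h (cmp A g i) = cmp A h (cmp A (cmp A g i) (cmp A t i))" using ti idr[OF gi] by simp
    also have "\<dots> = cmp A (cmp A h (cmp A (cmp A g i) t)) i" using assoc[OF i t gi] assoc[OF i git h] by simp
    also have "\<dots> = zm A F X" using e zm_right[OF i X] by simp
    finally show "\<exists>!u. u \<in> Hom A Q X \<and> cmp A u q = h" using Q h unfolding is_cokernel_def by blast
  qed
  then show ?thesis using that t by blast
qed

end

theorem corollary4p4:
  fixes A :: "('o, 'm) category" and M :: 'o
  assumes "abelian A" and "M \<in> Ob A"
  shows "(self_rickart A M \<longleftrightarrow>
           (\<forall>F C i d. split_fi_ses A F M C i d \<longrightarrow> self_F_split A F M C i d))
       \<and> (strongly_self_rickart A M \<longleftrightarrow>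
           (\<forall>F C i d. split_fi_ses A F M C i d \<longrightarrow> strongly_self_F_split A F M C i d))
       \<and> (dual_self_rickart A M \<longleftrightarrow>
           (\<forall>F C i d. split_fi_ses A F M C i d \<longrightarrow> dual_self_F_split A F M C i d))
       \<and> (dual_strongly_self_rickart A M \<longleftrightarrow>
           (\<forall>F C i d. split_fi_ses A F M C i d \<longrightarrow> dual_strongly_self_F_split A F M C i d))"
proof -
  interpret abcat A by unfold_locales (rule assms(1))
  obtain z where z: "is_zero_obj A z" using zero_ex by blast
  obtain i0 where i0: "i0 \<in> Hom A z M" using zero_from_ex[OF z assms(2)] by blast
  obtain d0 where d0: "d0 \<in> Hom A M z" using zero_to_ex[OF z assms(2)] by blast
  have T1: "split_fi_ses A z M M i0 (Id A M)" by (rule triv1[OF z i0])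
  have T2: "split_fi_ses A M M z (Id A M) d0" by (rule triv2[OF z d0])
  have idM: "Id A M \<in> Hom A M M" using id_hom[OF assms(2)] .
  have sr_imp: "strongly_self_rickart A M \<Longrightarrow> self_rickart A M"
    unfolding strongly_self_rickart_def self_rickart_def by blast
  have dsr_imp: "dual_strongly_self_rickart A M \<Longrightarrow> dual_self_rickart A M"
    unfolding dual_strongly_self_rickart_def dual_self_rickart_def by blast
  have fwdK: "is_kernel A M M (cmp A s (cmp A d g)) K k \<and> cmp A s (cmp A d g) \<in> Hom A M M"
    if S: "split_fi_ses A F M C i d" and R: "self_rickart A M" and g: "g \<in> Hom A M M"
      and K: "is_kernel A M C (cmp A d g) K k" and s: "s \<in> Hom A C M" and ds: "cmp A d s = Id A C"
    for F C i d g K k s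
  proof -
    have d: "d \<in> Hom A M C" using S unfolding split_fi_ses_def short_exact_def epi_def by blast
    show ?thesis using ker_transfer[OF s ds g d K] comp_hom[OF comp_hom[OF g d] s] by blast
  qed
  have idg: "cmp A (Id A M) g = g" if "g \<in> Hom A M M" for g using idl that by blast
  have gid: "cmp A g (Id A M) = g" if "g \<in> Hom A M M" for g using idr that by blast
  have P1: "self_rickart A M \<longleftrightarrow>
           (\<forall>F C i d. split_fi_ses A F M C i d \<longrightarrow> self_F_split A F M C i d)"
  proof
    assume R: "self_rickart A M"
    show "\<forall>F C i d. split_fi_ses A F M C i d \<longrightarrow> self_F_split A F M C i d"
    proof (intro allI impI)
      fix F C i d assume S: "split_fi_ses A F M C i d"
      obtain s where s: "s \<in> Hom A C M" "cmp A d s = Id A C" using split_d[OF S R] by blast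
      show "self_F_split A F M C i d" unfolding self_F_split_def
        using fwdK[OF S R _ _ s] R unfolding self_rickart_def by blast
    qed
  next
    assume H: "\<forall>F C i d. split_fi_ses A F M C i d \<longrightarrow> self_F_split A F M C i d"
    then have "self_F_split A z M M i0 (Id A M)" using T1 by blast
    then show "self_rickart A M" unfolding self_F_split_def self_rickart_def using idg by metis
  qed
  have P2: "strongly_self_rickart A M \<longleftrightarrow>
           (\<forall>F C i d. split_fi_ses A F M C i d \<longrightarrow> strongly_self_F_split A F M C i d)"
  proof
    assume R: "strongly_self_rickart A M"
    show "\<forall>F C i d. split_fi_ses A F M C i d \<longrightarrow> strongly_self_F_split A F M C i d"
    proof (intro allI impI)
      fix F C i d assume S: "split_fi_ses A F M C i d"
      obtain s where s: "s \<in> Hom A C M" "cmp A d s = Id A C" using split_d[OF S sr_imp[OF R]] by blast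
      show "strongly_self_F_split A F M C i d" unfolding strongly_self_F_split_def
        using fwdK[OF S sr_imp[OF R] _ _ s] R unfolding strongly_self_rickart_def by blast
    qed
  next
    assume H: "\<forall>F C i d. split_fi_ses A F M C i d \<longrightarrow> strongly_self_F_split A F M C i d"
    then have "strongly_self_F_split A z M M i0 (Id A M)" using T1 by blast
    then show "strongly_self_rickart A M" unfolding strongly_self_F_split_def strongly_self_rickart_def using idg by metis
  qed
  have P3: "dual_self_rickart A M \<longleftrightarrow>
           (\<forall>F C i d. split_fi_ses A F M C i d \<longrightarrow> dual_self_F_split A F M C i d)"
  proof
    assume R: "dual_self_rickart A M"
    show "\<forall>F C i d. split_fi_ses A F M C i d \<longrightarrow> dual_self_F_split A F M C i d"
    proof (intro allI impI)
      fix F C i d assume S: "split_fi_ses A F M C i d"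
      show "dual_self_F_split A F M C i d" unfolding dual_self_F_split_def
      proof (intro allI impI)
        fix g Q q assume g: "g \<in> Hom A M M" and Q: "is_cokernel A F M (cmp A g i) Q q"
        obtain t where t: "t \<in> Hom A M F" and Q': "is_cokernel A M M (cmp A (cmp A g i) t) Q q"
          using coker_transfer[OF S g Q] by blast
        have "cmp A (cmp A g i) t \<in> Hom A M M" using Q' unfolding is_cokernel_def by blast
        then show "is_retraction A M Q q" using R Q' unfolding dual_self_rickart_def by blast
      qed
    qed
  next
    assume H: "\<forall>F C i d. split_fi_ses A F M C i d \<longrightarrow> dual_self_F_split A F M C i d"
    then have "dual_self_F_split A M M z (Id A M) d0" using T2 by blast
    then show "dual_self_rickart A M" unfolding dual_self_F_split_def dual_self_rickart_def using gid by metis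
  qed
  have P4: "dual_strongly_self_rickart A M \<longleftrightarrow>
           (\<forall>F C i d. split_fi_ses A F M C i d \<longrightarrow> dual_strongly_self_F_split A F M C i d)"
  proof
    assume R: "dual_strongly_self_rickart A M"
    show "\<forall>F C i d. split_fi_ses A F M C i d \<longrightarrow> dual_strongly_self_F_split A F M C i d"
    proof (intro allI impI)
      fix F C i d assume S: "split_fi_ses A F M C i d"
      show "dual_strongly_self_F_split A F M C i d" unfolding dual_strongly_self_F_split_def
      proof (intro allI impI)
        fix g Q q assume g: "g \<in> Hom A M M" and Q: "is_cokernel A F M (cmp A g i) Q q"
        obtain t where t: "t \<in> Hom A M F" and Q': "is_cokernel A M M (cmp A (cmp A g i) t) Q q"
          using coker_transfer[OF S g Q] by blast
        have "cmp A (cmp A g i) t \<in> Hom A M M" using Q' unfolding is_cokernel_def by blast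
        then show "is_retraction A M Q q \<and> fully_coinvariant A M Q q"
          using R Q' unfolding dual_strongly_self_rickart_def by blast
      qed
    qed
  next
    assume H: "\<forall>F C i d. split_fi_ses A F M C i d \<longrightarrow> dual_strongly_self_F_split A F M C i d"
    then have "dual_strongly_self_F_split A M M z (Id A M) d0" using T2 by blast
    then show "dual_strongly_self_rickart A M"
      unfolding dual_strongly_self_F_split_def dual_strongly_self_rickart_def using gid by metis
  qed
  show ?thesis using P1 P2 P3 P4 by blast
qed

end
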